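(* Let $k$ be a positive integer, let $e$ be the all-ones vector of length $m$, and let $S$ be a nonnegative integral vector of length $n$. Then $\mathcal{C}_{m,n}(ke,S)$ is nonempty if and only if there is a row convex matrix in $\mathcal{A}_{m,n}(ke,S)$.
   Context: $\mathcal{A}_{m,n}(R,S)$ is the set of $m\times n$ $(0,1)$-matrices with row sum vector $R$ and column sum vector $S$. A $(0,1)$-matrix is row convex if the 1's in each row occur consecutively, column convex if the 1's in each column occur consecutively, and convex if it is both. $\mathcal{C}_{m,n}(R,S)$ is the set of convex matrices in $\mathcal{A}_{m,n}(R,S)$. *)

theory Defs
  imports Main
begin

text \<open>An m x n (0,1)-matrix is represented as a function nat => nat => nat
  whose entries at (i,j) with i < m, j < n lie in {0,1}; entries outside
  the index range are required to be 0 (so that each matrix has a unique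
  representation).  Row/column sum vectors are functions nat => nat,
  only their values at indices below m resp. n are relevant.\<close>

definition zero_one_matrix :: "nat \<Rightarrow> nat \<Rightarrow> (nat \<Rightarrow> nat \<Rightarrow> nat) \<Rightarrow> bool" where
  "zero_one_matrix m n A \<longleftrightarrow>
     (\<forall>i j. A i j \<in> {0, 1}) \<and> (\<forall>i j. (i \<ge> m \<or> j \<ge> n) \<longrightarrow> A i j = 0)"

definition matA :: "nat \<Rightarrow> nat \<Rightarrow> (nat \<Rightarrow> nat) \<Rightarrow> (nat \<Rightarrow> nat) \<Rightarrow> (nat \<Rightarrow> nat \<Rightarrow> nat) set" where
  "matA m n R S = {A. zero_one_matrix m n A
      \<and> (\<forall>i<m. (\<Sum>j<n. A i j) = R i)
      \<and> (\<forall>j<n. (\<Sum>i<m. A i j) = S j)}"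

definition row_convex :: "nat \<Rightarrow> nat \<Rightarrow> (nat \<Rightarrow> nat \<Rightarrow> nat) \<Rightarrow> bool" where
  "row_convex m n A \<longleftrightarrow>
     (\<forall>i<m. \<forall>j1 j2 j3. j1 \<le> j2 \<and> j2 \<le> j3 \<and> j3 < n \<and> A i j1 = 1 \<and> A i j3 = 1 \<longrightarrow> A i j2 = 1)"

definition col_convex :: "nat \<Rightarrow> nat \<Rightarrow> (nat \<Rightarrow> nat \<Rightarrow> nat) \<Rightarrow> bool" where
  "col_convex m n A \<longleftrightarrow>
     (\<forall>j<n. \<forall>i1 i2 i3. i1 \<le> i2 \<and> i2 \<le> i3 \<and> i3 < m \<and> A i1 j = 1 \<and> A i3 j = 1 \<longrightarrow> A i2 j = 1)"

definition convex_matrix :: "nat \<Rightarrow> nat \<Rightarrow> (nat \<Rightarrow> nat \<Rightarrow> nat) \<Rightarrow> bool" where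
  "convex_matrix m n A \<longleftrightarrow> row_convex m n A \<and> col_convex m n A"

definition matC :: "nat \<Rightarrow> nat \<Rightarrow> (nat \<Rightarrow> nat) \<Rightarrow> (nat \<Rightarrow> nat) \<Rightarrow> (nat \<Rightarrow> nat \<Rightarrow> nat) set" where
  "matC m n R S = {A \<in> matA m n R S. convex_matrix m n A}"

end

theory Submission
  imports Defs "HOL-Library.Multiset"
begin

lemma sum01_card:
  assumes "\<forall>x. f x \<in> {0, 1::nat}" "finite X"
  shows "(\<Sum>x\<in>X. f x) = card {x\<in>X. f x = 1}"
proof -
  have "(\<Sum>x\<in>X. f x) = (\<Sum>x\<in>X. if f x = 1 then 1 else 0)"
    by (rule sum.cong) (use assms in auto)
  also have "\<dots> = (\<Sum>x\<in>{x\<in>X. f x = 1}. 1)"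
    using assms(2) by (simp add: sum.inter_filter[symmetric])
  finally show ?thesis by simp
qed

lemma convex_interval:
  fixes Q :: "nat set"
  assumes sub: "Q \<subseteq> {..<n}" and cv: "\<forall>x y z. x \<le> y \<and> y \<le> z \<and> x \<in> Q \<and> z \<in> Q \<longrightarrow> y \<in> Q"
    and c: "card Q = k" and k: "k > 0"
  shows "\<exists>a. Q = {a..<a+k} \<and> a + k \<le> n"
proof -
  have fin: "finite Q" using sub finite_subset by blast
  have ne: "Q \<noteq> {}" using c k by auto
  define a where "a = Min Q"
  define b where "b = Max Q"
  have aO: "a \<in> Q" unfolding a_def using fin ne by (rule Min_in)
  have bO: "b \<in> Q" unfolding b_def using fin ne by (rule Max_in)
  have "Q \<subseteq> {a..b}" unfolding a_def b_def using fin by (simp add: subset_iff)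
  moreover have "{a..b} \<subseteq> Q"
  proof
    fix y assume "y \<in> {a..b}"
    then show "y \<in> Q" using cv[rule_format, of a y b] aO bO by simp
  qed
  ultimately have eq: "Q = {a..b}" by blast
  have ab: "a \<le> b" unfolding b_def using aO fin by simp
  have "card {a..b} = b + 1 - a" by simp
  hence kb: "k = b + 1 - a" using c eq by simp
  have "{a..b} = {a..<a+k}" using kb ab by auto
  moreover have "b < n" using bO sub by auto
  ultimately show ?thesis using eq kb ab by (intro exI[of _ a]) auto
qed

theorem mainTheorem5:
  fixes m n k :: nat and S :: "nat \<Rightarrow> nat"
  assumes "k > 0"
  shows "matC m n (\<lambda>i. k) S \<noteq> {} \<longleftrightarrow> (\<exists>A \<in> matA m n (\<lambda>i. k) S. row_convex m n A)"
proof
  assume "matC m n (\<lambda>i. k) S \<noteq> {}"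
  then show "\<exists>A \<in> matA m n (\<lambda>i. k) S. row_convex m n A"
    unfolding matC_def convex_matrix_def by auto
next
  assume "\<exists>A \<in> matA m n (\<lambda>i. k) S. row_convex m n A"
  then obtain A where AA: "A \<in> matA m n (\<lambda>i. k) S" and rc: "row_convex m n A" by blast
  have z: "zero_one_matrix m n A" and rs: "\<forall>i<m. (\<Sum>j<n. A i j) = k"
    and cs: "\<forall>j<n. (\<Sum>i<m. A i j) = S j" using AA unfolding matA_def by auto
  have z1: "\<forall>i j. A i j \<in> {0,1}" using z unfolding zero_one_matrix_def by auto
  have "\<forall>i<m. \<exists>a. {j\<in>{..<n}. A i j = 1} = {a..<a+k} \<and> a + k \<le> n"
  proof (intro allI impI)
    fix i assume i: "i < m"
    show "\<exists>a. {j\<in>{..<n}. A i j = 1} = {a..<a+k} \<and> a + k \<le> n"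
    proof (rule convex_interval)
      show "{j \<in> {..<n}. A i j = 1} \<subseteq> {..<n}" by auto
      show "\<forall>x y z. x \<le> y \<and> y \<le> z \<and> x \<in> {j \<in> {..<n}. A i j = 1} \<and> z \<in> {j \<in> {..<n}. A i j = 1}
           \<longrightarrow> y \<in> {j \<in> {..<n}. A i j = 1}"
      proof (intro allI impI)
        fix x y z
        assume h: "x \<le> y \<and> y \<le> z \<and> x \<in> {j \<in> {..<n}. A i j = 1} \<and> z \<in> {j \<in> {..<n}. A i j = 1}"
        have zn: "z < n" and ax: "A i x = 1" and az: "A i z = 1" using h by auto
        have "A i y = 1" using rc[unfolded row_convex_def, rule_format, of i x y z] i h zn ax az by blast
        then show "y \<in> {j \<in> {..<n}. A i j = 1}" using h zn by simp
      qed
      show "card {j \<in> {..<n}. A i j = 1} = k"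
      proof -
        have "(\<Sum>j<n. A i j) = card {j \<in> {..<n}. A i j = 1}"
          by (rule sum01_card) (use z1 in simp_all)
        then show ?thesis using rs i by simp
      qed
      show "k > 0" by fact
    qed
  qed
  then obtain a where a: "\<forall>i<m. {j\<in>{..<n}. A i j = 1} = {a i..<a i+k} \<and> a i + k \<le> n"
  proof -
    assume ex: "\<forall>i<m. \<exists>a. {j\<in>{..<n}. A i j = 1} = {a..<a+k} \<and> a + k \<le> n"
    assume th: "\<And>a. \<forall>i<m. {j\<in>{..<n}. A i j = 1} = {a i..<a i+k} \<and> a i + k \<le> n \<Longrightarrow> thesis"
    define a where "a = (\<lambda>i. SOME a. {j\<in>{..<n}. A i j = 1} = {a..<a+k} \<and> a + k \<le> n)"
    have "\<forall>i<m. {j\<in>{..<n}. A i j = 1} = {a i..<a i+k} \<and> a i + k \<le> n"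
    proof (intro allI impI)
      fix i assume "i < m"
      then show "{j\<in>{..<n}. A i j = 1} = {a i..<a i+k} \<and> a i + k \<le> n"
        unfolding a_def using someI_ex[OF ex[rule_format]] by blast
    qed
    then show thesis by (rule th)
  qed
  define L where "L = map a [0..<m]"
  define Ls where "Ls = sort L"
  have lenLs: "length Ls = m" unfolding Ls_def L_def by simp
  have srt: "sorted Ls" unfolding Ls_def by simp
  have msetLs: "mset Ls = mset L" unfolding Ls_def by simp
  have Lsb: "Ls ! i + k \<le> n" if "i < m" for i
  proof -
    have "Ls ! i \<in> set Ls" using that lenLs by simp
    also have "set Ls = set L" using msetLs by (metis set_mset_mset)
    finally obtain i' where "i' < m" "Ls ! i = a i'" unfolding L_def by auto
    thus ?thesis using a by auto
  qed
  define B where "B = (\<lambda>i j. if i < m \<and> j < n \<and> Ls ! i \<le> j \<and> j < Ls ! i + k then 1 else (0::nat))"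
  have zB: "zero_one_matrix m n B" unfolding zero_one_matrix_def B_def by auto
  have zB1: "\<forall>i j. B i j \<in> {0,1}" unfolding B_def by auto
  have rowB: "\<forall>i<m. (\<Sum>j<n. B i j) = k"
  proof (intro allI impI)
    fix i assume i: "i < m"
    have "(\<Sum>j<n. B i j) = card {j\<in>{..<n}. B i j = 1}" by (rule sum01_card) (use zB1 in simp_all)
    also have "{j\<in>{..<n}. B i j = 1} = {Ls ! i..<Ls ! i + k}" using Lsb[OF i] i unfolding B_def by auto
    finally show "(\<Sum>j<n. B i j) = k" by simp
  qed
  have cnt: "card {i\<in>{..<m}. P (Ls ! i)} = card {i\<in>{..<m}. P (a i)}" for P
  proof -
    have "{i\<in>{..<m}. P (Ls ! i)} = {i. i < length Ls \<and> P (Ls ! i)}" using lenLs by auto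
    hence "card {i\<in>{..<m}. P (Ls ! i)} = length (filter P Ls)"
      by (simp add: length_filter_conv_card)
    also have "\<dots> = size (filter_mset P (mset Ls))" by (metis mset_filter size_mset)
    also have "\<dots> = size (filter_mset P (mset L))" using msetLs by simp
    also have "\<dots> = length (filter P L)" by (metis mset_filter size_mset)
    also have "\<dots> = card {i. i < length L \<and> P (L ! i)}"
      by (simp add: length_filter_conv_card)
    also have "{i. i < length L \<and> P (L ! i)} = {i\<in>{..<m}. P (a i)}"
      unfolding L_def by auto
    finally show ?thesis .
  qed
  have colB: "\<forall>j<n. (\<Sum>i<m. B i j) = S j"
  proof (intro allI impI)
    fix j assume j: "j < n"
    have "(\<Sum>i<m. B i j) = card {i\<in>{..<m}. B i j = 1}" by (rule sum01_card) (use zB1 in simp_all)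
    also have "{i\<in>{..<m}. B i j = 1} = {i\<in>{..<m}. Ls ! i \<le> j \<and> j < Ls ! i + k}"
      using j unfolding B_def by auto
    also have "card \<dots> = card {i\<in>{..<m}. a i \<le> j \<and> j < a i + k}"
      using cnt[of "\<lambda>x. x \<le> j \<and> j < x + k"] by simp
    also have "{i\<in>{..<m}. a i \<le> j \<and> j < a i + k} = {i\<in>{..<m}. A i j = 1}"
    proof (rule Collect_cong)
      fix i
      show "(i \<in> {..<m} \<and> a i \<le> j \<and> j < a i + k) = (i \<in> {..<m} \<and> A i j = 1)"
      proof (cases "i < m")
        case True
        have "(j \<in> {j\<in>{..<n}. A i j = 1}) = (j \<in> {a i..<a i+k})" using a True by simp
        then show ?thesis using True j by auto
      qed auto
    qed
    also have "card \<dots> = (\<Sum>i<m. A i j)" by (rule sum01_card[symmetric]) (use z1 in simp_all)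
    finally show "(\<Sum>i<m. B i j) = S j" using cs j by simp
  qed
  have rcB: "row_convex m n B" unfolding row_convex_def B_def by (auto split: if_splits)
  have ccB: "col_convex m n B"
    unfolding col_convex_def
  proof (intro allI impI)
    fix j i1 i2 i3
    assume h: "j < n" "i1 \<le> i2 \<and> i2 \<le> i3 \<and> i3 < m \<and> B i1 j = 1 \<and> B i3 j = 1"
    have "Ls ! i1 \<le> Ls ! i2" "Ls ! i2 \<le> Ls ! i3"
      using sorted_nth_mono[OF srt] h lenLs by auto
    then show "B i2 j = 1" using h unfolding B_def by (auto split: if_splits)
  qed
  have "B \<in> matC m n (\<lambda>i. k) S"
    unfolding matC_def matA_def convex_matrix_def using zB rowB colB rcB ccB by auto
  then show "matC m n (\<lambda>i. k) S \<noteq> {}" by blast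
qed

end
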